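(* For all integers $\ell\ge 3$ and $n\ge 1$, $$\ell n-2\ell-1\le f_\ell(n,1)\le \ell n-\ell+1.$$
   Context: $f_\ell(n,1)$ denotes the clique number of the xor-product of $\ell$ copies of the complete graph $K_n$. The xor-product $G\cdot H$ of graphs $G,H$ has vertex set $V(G)\times V(H)$, and $(g,h)$, $(g',h')$ are adjacent iff exactly one of the following holds: $gg'\in E(G)$, $hh'\in E(H)$; the xor-product of several graphs is formed iteratively (the operation is associative: two tuples are adjacent iff they are adjacent in an odd number of coordinates). *)

theory Defs
  imports Main
begin

text \<open>Vertices of the xor-product of l copies of K_n: tuples of length l
  with entries in {0..<n}, represented as lists.\<close>
definition xor_vertices :: "nat \<Rightarrow> nat \<Rightarrow> nat list set" where
  "xor_vertices l n = {xs. length xs = l \<and> set xs \<subseteq> {0..<n}}"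

text \<open>Two tuples are adjacent iff they are adjacent (i.e. differ, since K_n is
  complete) in an odd number of coordinates.\<close>
definition xor_adj :: "nat list \<Rightarrow> nat list \<Rightarrow> bool" where
  "xor_adj xs ys = odd (card {i. i < length xs \<and> xs ! i \<noteq> ys ! i})"

definition xor_clique :: "nat \<Rightarrow> nat \<Rightarrow> nat list set \<Rightarrow> bool" where
  "xor_clique l n C \<longleftrightarrow> C \<subseteq> xor_vertices l n \<and>
     (\<forall>x\<in>C. \<forall>y\<in>C. x \<noteq> y \<longrightarrow> xor_adj x y)"

text \<open>f_l(n,1): the clique number of the xor-product of l copies of K_n.\<close>
definition f_xor :: "nat \<Rightarrow> nat \<Rightarrow> nat" where
  "f_xor l n = Max (card ` {C. xor_clique l n C})"

end

theory Submission
  imports Defs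
begin

lemma card_filter_sum: "finite A \<Longrightarrow> card {x\<in>A. Q x} = (\<Sum>x\<in>A. if Q x then 1 else (0::nat))"
  by (simp add: sum.If_cases Int_def)

lemma par_sum: "finite A \<Longrightarrow> odd (sum (f::'a\<Rightarrow>nat) A) \<longleftrightarrow> odd (card {p\<in>A. odd (f p)})"
proof (induction A rule: finite_induct)
  case empty then show ?case by simp
next
  case (insert a A)
  have e: "{p \<in> insert a A. odd (f p)} = (if odd (f a) then insert a {p\<in>A. odd (f p)} else {p\<in>A. odd (f p)})"
    by auto
  have fin: "finite {p\<in>A. odd (f p)}" using insert by simp
  have nin: "a \<notin> {p\<in>A. odd (f p)}" using insert by simp
  have "card {p \<in> insert a A. odd (f p)} = (if odd (f a) then Suc (card {p\<in>A. odd (f p)}) else card {p\<in>A. odd (f p)})"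
    unfolding e using card_insert_disjoint[OF fin nin] by presburger
  moreover have "sum f (insert a A) = f a + sum f A" using insert by simp
  ultimately show ?case using insert.IH by auto
qed

lemma dc:
  assumes "finite A" "finite S"
  shows "(\<Sum>p\<in>A. card {x\<in>S. p \<in> V x}) = (\<Sum>x\<in>S. card (V x \<inter> A))"
proof -
  have "(\<Sum>p\<in>A. card {x\<in>S. p \<in> V x}) = (\<Sum>p\<in>A. \<Sum>x\<in>S. if p \<in> V x then 1 else (0::nat))"
    using assms by (simp add: card_filter_sum)
  also have "\<dots> = (\<Sum>x\<in>S. \<Sum>p\<in>A. if p \<in> V x then 1 else (0::nat))"
    by (rule sum.swap)
  also have "\<dots> = (\<Sum>x\<in>S. card (V x \<inter> A))"
  proof (rule sum.cong)
    fix x assume "x \<in> S"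
    have "V x \<inter> A = {p\<in>A. p \<in> V x}" by auto
    then show "(\<Sum>p\<in>A. if p \<in> V x then 1 else (0::nat)) = card (V x \<inter> A)"
      using assms by (simp add: card_filter_sum)
  qed simp
  finally show ?thesis .
qed

definition grid :: "nat \<Rightarrow> nat \<Rightarrow> (nat \<times> nat) set" where
  "grid l n = {0..<l} \<times> {0..<n}"
definition vx :: "nat \<Rightarrow> nat list \<Rightarrow> (nat \<times> nat) set" where
  "vx l x = (\<lambda>i. (i, x!i)) ` {0..<l}"
definition sig :: "nat \<Rightarrow> nat \<Rightarrow> nat list set \<Rightarrow> (nat \<times> nat) set" where
  "sig l n S = {p \<in> grid l n. odd (card {x\<in>S. p \<in> vx l x})}"
definition row :: "nat \<Rightarrow> nat \<Rightarrow> (nat \<times> nat) set" where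
  "row n i = {i} \<times> {0..<n}"

lemma finite_grid[simp]: "finite (grid l n)" by (simp add: grid_def)

lemma key:
  assumes "A \<subseteq> grid l n" "finite S"
  shows "odd (card (sig l n S \<inter> A)) \<longleftrightarrow> odd (\<Sum>x\<in>S. card (vx l x \<inter> A))"
proof -
  have fA: "finite A" by (rule finite_subset[OF assms(1)]) simp
  have e: "sig l n S \<inter> A = {p\<in>A. odd (card {x\<in>S. p \<in> vx l x})}"
    using assms(1) unfolding sig_def by auto
  have "odd (card (sig l n S \<inter> A)) \<longleftrightarrow> odd (\<Sum>p\<in>A. card {x\<in>S. p \<in> vx l x})"
    unfolding e by (rule par_sum[OF fA, symmetric])
  also have "\<dots> \<longleftrightarrow> odd (\<Sum>x\<in>S. card (vx l x \<inter> A))"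
    by (simp only: dc[OF fA assms(2)])
  finally show ?thesis .
qed

lemma vx_grid: "x \<in> xor_vertices l n \<Longrightarrow> vx l x \<subseteq> grid l n"
  by (auto simp: vx_def grid_def xor_vertices_def)

lemma vx_row: assumes "x \<in> xor_vertices l n" "i < l" shows "card (vx l x \<inter> row n i) = 1"
proof -
  have "length x = l" "set x \<subseteq> {0..<n}" using assms(1) by (auto simp: xor_vertices_def)
  then have "x ! i \<in> {0..<n}" using nth_mem[of i x] assms(2) by blast
  then have "x ! i < n" by simp
  then have "vx l x \<inter> row n i = {(i, x!i)}" using assms(2) by (auto simp: vx_def row_def)
  then show ?thesis by simp
qed

lemma row_grid: "i < l \<Longrightarrow> row n i \<subseteq> grid l n" by (auto simp: row_def grid_def)

lemma vx_int: "card (vx l x \<inter> vx l y) = card {i. i < l \<and> x!i = y!i}"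
proof -
  have e: "vx l x \<inter> vx l y = (\<lambda>i. (i, x!i)) ` {i. i < l \<and> x!i = y!i}"
    by (auto simp: vx_def)
  have "inj_on (\<lambda>i. (i, x!i)) {i. i < l \<and> x!i = y!i}" by (auto simp: inj_on_def)
  then show ?thesis unfolding e by (rule card_image)
qed

lemma agree_dis: "card {i. i < l \<and> x!i = y!i} + card {i. i < l \<and> x!i \<noteq> y!i} = l"
proof -
  have "card {i. i < l \<and> x!i = y!i} + card {i. i < l \<and> x!i \<noteq> y!i}
      = card ({i. i < l \<and> x!i = y!i} \<union> {i. i < l \<and> x!i \<noteq> y!i})"
    by (rule card_Un_disjoint[symmetric]) auto
  also have "{i. i < l \<and> x!i = y!i} \<union> {i. i < l \<and> x!i \<noteq> y!i} = {..<l}" by auto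
  finally show ?thesis by simp
qed

lemma clique_finite: "xor_clique l n C \<Longrightarrow> finite C"
proof -
  have "xor_vertices l n = {xs. set xs \<subseteq> {0..<n} \<and> length xs = l}"
    by (auto simp: xor_vertices_def)
  then have "finite (xor_vertices l n)" using finite_lists_length_eq[of "{0..<n}" l] by simp
  then show "xor_clique l n C \<Longrightarrow> finite C" by (auto simp: xor_clique_def intro: finite_subset)
qed

lemma decode:
  assumes cl: "xor_clique l n C" and S: "S \<subseteq> C" and y: "y \<in> C" and l: "l \<ge> 1"
  shows "y \<in> S \<longleftrightarrow> (if odd l then odd (card (sig l n S \<inter> vx l y))
           else odd (card (sig l n S \<inter> vx l y)) \<noteq> odd (card (sig l n S \<inter> row n 0)))"
proof -
  have fC: "finite C" using clique_finite[OF cl] .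
  have fS: "finite S" using S fC finite_subset by blast
  have yV: "y \<in> xor_vertices l n" using cl y by (auto simp: xor_clique_def)
  have k1: "odd (card (sig l n S \<inter> vx l y)) \<longleftrightarrow> odd (\<Sum>x\<in>S. card (vx l x \<inter> vx l y))"
    by (rule key[OF vx_grid[OF yV] fS])
  have k2: "odd (card (sig l n S \<inter> row n 0)) \<longleftrightarrow> odd (\<Sum>x\<in>S. card (vx l x \<inter> row n 0))"
    by (rule key[OF row_grid fS]) (use l in auto)
  have "(\<Sum>x\<in>S. card (vx l x \<inter> row n 0)) = (\<Sum>x\<in>S. 1)"
    apply (rule sum.cong, simp)
    apply (rule vx_row) using S cl l by (auto simp: xor_clique_def)
  then have k2': "odd (card (sig l n S \<inter> row n 0)) \<longleftrightarrow> odd (card S)" using k2 by simp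
  have par: "odd (card (vx l x \<inter> vx l y)) \<longleftrightarrow> (if x = y then odd l else even l)" if "x \<in> S" for x
  proof (cases "x = y")
    case True
    have "card (vx l x \<inter> vx l y) = card {i. i<l \<and> x!i = y!i}" by (rule vx_int)
    also have "{i. i<l \<and> x!i = y!i} = {..<l}" using True by auto
    finally have c: "card (vx l x \<inter> vx l y) = l" by simp
    have "(if x = y then odd l else even l) = odd l" using True by simp
    then show ?thesis by (simp only: c)
  next
    case False
    have "x \<in> C" using that S by auto
    then have "xor_adj x y" using cl y False by (auto simp: xor_clique_def)
    moreover have "length x = l" using \<open>x \<in> C\<close> cl by (auto simp: xor_clique_def xor_vertices_def)
    ultimately have "odd (card {i. i < l \<and> x!i \<noteq> y!i})" by (simp add: xor_adj_def)
    moreover have "\<And>A D. A + D = l \<Longrightarrow> odd D \<Longrightarrow> odd A \<longleftrightarrow> even l" by presburger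
    ultimately have "odd (card {i. i < l \<and> x!i = y!i}) \<longleftrightarrow> even l" using agree_dis[of l x y] by blast
    then show ?thesis using False by (simp only: vx_int if_False)
  qed
  have k3: "odd (\<Sum>x\<in>S. card (vx l x \<inter> vx l y)) \<longleftrightarrow>
      odd (card {x\<in>S. if x = y then odd l else even l})"
  proof -
    have "{x\<in>S. odd (card (vx l x \<inter> vx l y))} = {x\<in>S. if x = y then odd l else even l}"
      using par by blast
    then show ?thesis using par_sum[OF fS, of "\<lambda>x. card (vx l x \<inter> vx l y)"] by simp
  qed
  show ?thesis
  proof (cases "odd l")
    case True
    have "{x\<in>S. if x = y then odd l else even l} = S \<inter> {y}" using True by auto
    then show ?thesis using True k1 k3 by (cases "y \<in> S") auto
  next
    case False
    have e: "{x\<in>S. if x = y then odd l else even l} = S - {y}" using False by auto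
    have "card (S - {y}) = (if y \<in> S then card S - 1 else card S)" using fS by simp
    moreover have "y \<in> S \<Longrightarrow> card S \<ge> 1" using fS by (metis One_nat_def Suc_leI card_gt_0_iff empty_iff)
    ultimately have "odd (card (S - {y})) \<longleftrightarrow> (odd (card S) \<noteq> (y \<in> S))" by (cases "y \<in> S") auto
    then have h: "odd (card (sig l n S \<inter> vx l y)) \<longleftrightarrow> (odd (card S) \<noteq> (y \<in> S))" using k1 k3 e by simp
    show ?thesis using False h k2' by (cases "y \<in> S"; cases "odd (card S)") auto
  qed
qed


lemma row_parity:
  assumes cl: "xor_clique l n C" and S: "S \<subseteq> C" and i: "i < l"
  shows "odd (card (sig l n S \<inter> row n i)) \<longleftrightarrow> odd (card S)"
proof -
  have fS: "finite S" using S clique_finite[OF cl] finite_subset by blast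
  have k2: "odd (card (sig l n S \<inter> row n i)) \<longleftrightarrow> odd (\<Sum>x\<in>S. card (vx l x \<inter> row n i))"
    by (rule key[OF row_grid[OF i] fS])
  have "(\<Sum>x\<in>S. card (vx l x \<inter> row n i)) = (\<Sum>x\<in>S. 1)"
    apply (rule sum.cong, simp)
    apply (rule vx_row) using S cl i by (auto simp: xor_clique_def)
  then show ?thesis using k2 by simp
qed

lemma sig_inj:
  assumes cl: "xor_clique l n C" and S: "S \<subseteq> C" and T: "T \<subseteq> C" and l: "l \<ge> 1"
    and eq: "sig l n S = sig l n T"
  shows "S = T"
proof -
  have "y \<in> S \<longleftrightarrow> y \<in> T" if "y \<in> C" for y
    using decode[OF cl S that l] decode[OF cl T that l] eq by simp
  then show ?thesis using S T by blast
qed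

definition DD :: "nat \<Rightarrow> (nat \<times> nat) set" where
  "DD l = (\<lambda>i. (i, 0::nat)) ` {1..<l}"

lemma sig_grid: "sig l n S \<subseteq> grid l n" by (auto simp: sig_def)

lemma row_split:
  assumes "1 \<le> i" "i < l" "0 < n" "B \<subseteq> grid l n"
  shows "card (B \<inter> row n i) = card ((B - DD l) \<inter> row n i) + (if (i,0) \<in> B then 1 else 0)"
proof -
  have e: "B \<inter> row n i = ((B - DD l) \<inter> row n i) \<union> (B \<inter> {(i,0)})"
    using assms by (auto simp: DD_def row_def)
  have f1: "finite ((B - DD l) \<inter> row n i)" by (simp add: row_def)
  have f2: "finite (B \<inter> {(i,0)})" by simp
  have d: "((B - DD l) \<inter> row n i) \<inter> (B \<inter> {(i,0)}) = {}"
    using assms by (auto simp: DD_def)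
  have "card (B \<inter> row n i) = card ((B - DD l) \<inter> row n i) + card (B \<inter> {(i,0)})"
    unfolding e by (rule card_Un_disjoint[OF f1 f2 d])
  moreover have "card (B \<inter> {(i,0)}) = (if (i,0) \<in> B then 1 else 0)" by auto
  ultimately show ?thesis by simp
qed

lemma row0: "(B - DD l) \<inter> row n 0 = B \<inter> row n 0"
  by (auto simp: DD_def row_def)

lemma recover:
  assumes cl: "xor_clique l n C" and S: "S \<subseteq> C" and T: "T \<subseteq> C" and l: "l \<ge> 1" and n: "n \<ge> 1"
    and eq: "sig l n S - DD l = sig l n T - DD l"
  shows "sig l n S = sig l n T"
proof -
  have "p \<in> sig l n S \<longleftrightarrow> p \<in> sig l n T" for p
  proof (cases "p \<in> DD l")
    case False then show ?thesis using eq by blast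
  next
    case True
    then obtain i where i: "1 \<le> i" "i < l" and p: "p = (i, 0)" by (auto simp: DD_def)
    have A: "(i,0) \<in> sig l n X \<longleftrightarrow> odd (card ((sig l n X - DD l) \<inter> row n i)) \<noteq> odd (card ((sig l n X - DD l) \<inter> row n 0))"
      if X: "X \<subseteq> C" for X
    proof -
      have r1: "odd (card (sig l n X \<inter> row n i)) \<longleftrightarrow> odd (card X)" by (rule row_parity[OF cl X i(2)])
      have r0: "odd (card (sig l n X \<inter> row n 0)) \<longleftrightarrow> odd (card X)" by (rule row_parity[OF cl X]) (use l in auto)
      have sp: "card (sig l n X \<inter> row n i) = card ((sig l n X - DD l) \<inter> row n i) + (if (i,0) \<in> sig l n X then 1 else 0)"
        by (rule row_split[OF i]) (use n sig_grid in auto)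
      show ?thesis using r1 r0 sp row0[of "sig l n X" l n] by (cases "(i,0) \<in> sig l n X") auto
    qed
    show ?thesis using A[OF S] A[OF T] eq p by simp
  qed
  then show ?thesis by blast
qed

lemma card_DD: "card (DD l) = l - 1"
proof -
  have "inj_on (\<lambda>i. (i, 0::nat)) {1..<l}" by (auto simp: inj_on_def)
  then show ?thesis by (simp add: DD_def card_image)
qed

lemma upper_clique:
  assumes cl: "xor_clique l n C" and l: "l \<ge> 1" and n: "n \<ge> 1"
  shows "card C \<le> l * n - (l - 1)"
proof -
  have fC: "finite C" by (rule clique_finite[OF cl])
  let ?F = "\<lambda>S. sig l n S - DD l"
  have inj: "inj_on ?F (Pow C)"
  proof (rule inj_onI)
    fix S T assume "S \<in> Pow C" "T \<in> Pow C" "?F S = ?F T"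
    then show "S = T" using sig_inj[OF cl _ _ l] recover[OF cl _ _ l n] by blast
  qed
  have img: "?F ` Pow C \<subseteq> Pow (grid l n - DD l)" using sig_grid by blast
  have cp: "card (Pow C) \<le> card (Pow (grid l n - DD l))"
    by (rule card_inj_on_le[OF inj img]) simp
  have sub: "DD l \<subseteq> grid l n" using n by (auto simp: DD_def grid_def)
  have fD: "finite (DD l)" by (simp add: DD_def)
  have cd: "card (grid l n - DD l) = card (grid l n) - card (DD l)" by (rule card_Diff_subset[OF fD sub])
  have p1: "card (Pow C) = 2 ^ card C" by (rule card_Pow[OF fC])
  have p2: "card (Pow (grid l n - DD l)) = 2 ^ card (grid l n - DD l)" by (rule card_Pow) simp
  have "(2::nat) ^ card C \<le> 2 ^ card (grid l n - DD l)" using cp unfolding p1 p2 .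
  then have "card C \<le> card (grid l n - DD l)"
    by (rule power_le_imp_le_exp[rotated]) simp
  moreover have "card (grid l n) = l * n" by (simp add: grid_def)
  ultimately show ?thesis unfolding cd by (simp add: card_DD)
qed

definition wfn :: "nat \<Rightarrow> nat \<Rightarrow> nat \<Rightarrow> nat \<Rightarrow> nat" where
  "wfn L i a k = (if k < i then 1 else if k = i then a else if k < L then 0 else i mod 2)"
definition zfn :: "nat \<Rightarrow> (nat \<Rightarrow> nat) \<Rightarrow> nat \<Rightarrow> nat \<Rightarrow> nat" where
  "zfn L y c k = (if k < L then y k else c)"
definition wv where "wv L i a = map (wfn L i a) [0..<Suc L]"
definition zv where "zv L y c = map (zfn L y c) [0..<Suc L]"

lemma adj_map: "xor_adj (map f [0..<m]) (map g [0..<m]) = odd (card {k. k < m \<and> f k \<noteq> g k})"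
proof -
  have "{k. k < length (map f [0..<m]) \<and> map f [0..<m] ! k \<noteq> map g [0..<m] ! k} = {k. k < m \<and> f k \<noteq> g k}"
    by auto
  then show ?thesis by (simp add: xor_adj_def)
qed

lemma adj_sym: "card {k. k < m \<and> f k \<noteq> g k} = card {k. k < (m::nat) \<and> g k \<noteq> f k}"
  by (simp add: eq_commute)

lemma ww_same: assumes "a \<noteq> b" "i < L" shows "odd (card {k. k < Suc L \<and> wfn L i a k \<noteq> wfn L i b k})"
proof -
  have "{k. k < Suc L \<and> wfn L i a k \<noteq> wfn L i b k} = {i}" using assms by (auto simp: wfn_def)
  then show ?thesis by simp
qed

lemma ww_lt: assumes "i < j" "j < L" "a \<ge> 2" "b \<ge> 2"
  shows "odd (card {k. k < Suc L \<and> wfn L i a k \<noteq> wfn L j b k})"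
proof -
  have e: "{k. k < Suc L \<and> wfn L i a k \<noteq> wfn L j b k} = {i..j} \<union> {k. k = L \<and> i mod 2 \<noteq> j mod 2}"
    using assms by (auto simp: wfn_def)
  have d: "{i..j} \<inter> {k. k = L \<and> i mod 2 \<noteq> j mod 2} = {}" using assms by auto
  have f: "finite {k. k = L \<and> i mod 2 \<noteq> j mod 2}" by simp
  have c2: "card {k. k = L \<and> i mod 2 \<noteq> j mod 2} = (if i mod 2 \<noteq> j mod 2 then 1 else 0)" by auto
  have "card {k. k < Suc L \<and> wfn L i a k \<noteq> wfn L j b k} = Suc j - i + (if i mod 2 \<noteq> j mod 2 then 1 else 0)"
    unfolding e using card_Un_disjoint[OF _ f d] c2 by simp
  moreover have "odd (Suc j - i + (if i mod 2 \<noteq> j mod 2 then 1 else 0))"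
    using assms(1) by (simp split: if_split) presburger
  ultimately show ?thesis by simp
qed

lemma zz: assumes "c \<noteq> c'" shows "odd (card {k. k < Suc L \<and> zfn L y c k \<noteq> zfn L y c' k})"
proof -
  have "{k. k < Suc L \<and> zfn L y c k \<noteq> zfn L y c' k} = {L}" using assms by (auto simp: zfn_def)
  then show ?thesis by simp
qed

lemma wz: assumes "i < L" "a \<ge> 2" "c \<ge> 2" "y i \<noteq> a"
  shows "card {k. k < Suc L \<and> wfn L i a k \<noteq> zfn L y c k}
     = card {k. k < i \<and> y k \<noteq> 1} + card {k. i < k \<and> k < L \<and> y k \<noteq> 0} + 2"
proof -
  let ?A = "{k. k < i \<and> y k \<noteq> 1}" and ?B = "{k. i < k \<and> k < L \<and> y k \<noteq> 0}"
  have e: "{k. k < Suc L \<and> wfn L i a k \<noteq> zfn L y c k} = (?A \<union> ?B) \<union> {i, L}"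
    using assms by (auto simp: wfn_def zfn_def)
  have "card ((?A \<union> ?B) \<union> {i, L}) = card (?A \<union> ?B) + card {i, L}"
    by (rule card_Un_disjoint) (use assms in auto)
  moreover have "card (?A \<union> ?B) = card ?A + card ?B"
    by (rule card_Un_disjoint) auto
  moreover have "card {i, L} = 2" using assms by simp
  ultimately show ?thesis unfolding e by simp
qed

definition CC where "CC L y n W = (\<lambda>(i,a). wv L i a) ` W \<union> zv L y ` {2..<n}"

lemma generic:
  assumes n: "3 \<le> n" and W: "W \<subseteq> {0..<L} \<times> {2..<n}"
    and yb: "\<And>k. k < L \<Longrightarrow> y k < n"
    and ya: "\<And>i a. (i,a) \<in> W \<Longrightarrow> y i \<noteq> a"
    and par: "\<And>i a. (i,a) \<in> W \<Longrightarrow> odd (card {k. k < i \<and> y k \<noteq> 1} + card {k. i < k \<and> k < L \<and> y k \<noteq> 0})"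
  shows "xor_clique (Suc L) n (CC L y n W) \<and> card (CC L y n W) = card W + (n - 2)"
proof
  have vw: "wv L i a \<in> xor_vertices (Suc L) n" if "(i,a) \<in> W" for i a
  proof -
    have "i < L" "a < n" using W that by auto
    then show ?thesis using n by (auto simp: wv_def xor_vertices_def wfn_def)
  qed
  have vz: "zv L y c \<in> xor_vertices (Suc L) n" if "c < n" for c
    using that yb by (auto simp: zv_def xor_vertices_def zfn_def)
  have adj: "xor_adj x z" if xC: "x \<in> CC L y n W" and zC: "z \<in> CC L y n W" and xz: "x \<noteq> z" for x z
  proof -
    consider (WW) i a j b where "(i,a) \<in> W" "(j,b) \<in> W" "x = wv L i a" "z = wv L j b"
      | (WZ) i a c where "(i,a) \<in> W" "c \<in> {2..<n}" "x = wv L i a" "z = zv L y c"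
      | (ZW) i a c where "(i,a) \<in> W" "c \<in> {2..<n}" "z = wv L i a" "x = zv L y c"
      | (ZZ) c c' where "c \<in> {2..<n}" "c' \<in> {2..<n}" "x = zv L y c" "z = zv L y c'"
    proof -
      have "(\<exists>i a. (i,a)\<in>W \<and> x = wv L i a) \<or> (\<exists>c\<in>{2..<n}. x = zv L y c)" using xC unfolding CC_def by auto
      moreover have "(\<exists>i a. (i,a)\<in>W \<and> z = wv L i a) \<or> (\<exists>c\<in>{2..<n}. z = zv L y c)" using zC unfolding CC_def by auto
      ultimately show ?thesis using that by blast
    qed
    then show ?thesis
    proof cases
      case WW
      have ia: "i < L" "a \<ge> 2" "j < L" "b \<ge> 2" using W WW by auto
      consider "i = j" | "i < j" | "j < i" by linarith
      then show ?thesis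
      proof cases
        case 1
        then have "a \<noteq> b" using WW xz by auto
        then show ?thesis using WW 1 ia ww_same[of a b i L] by (simp add: wv_def adj_map del: upt_Suc)
      next
        case 2 then show ?thesis using WW ia ww_lt[of i j L a b] by (simp add: wv_def adj_map del: upt_Suc)
      next
        case 3 then show ?thesis using WW ia ww_lt[of j i L b a] adj_sym[of "Suc L" "wfn L i a" "wfn L j b"]
          by (simp add: wv_def adj_map del: upt_Suc)
      qed
    next
      case WZ
      have ia: "i < L" "a \<ge> 2" "c \<ge> 2" using W WZ by auto
      show ?thesis using WZ ia wz[of i L a c y] ya[OF WZ(1)] par[OF WZ(1)] by (simp add: wv_def zv_def adj_map del: upt_Suc)
    next
      case ZW
      have ia: "i < L" "a \<ge> 2" "c \<ge> 2" using W ZW by auto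
      show ?thesis using ZW ia wz[of i L a c y] ya[OF ZW(1)] par[OF ZW(1)]
          adj_sym[of "Suc L" "wfn L i a" "zfn L y c"] by (simp add: wv_def zv_def adj_map del: upt_Suc)
    next
      case ZZ
      then have "c \<noteq> c'" using xz by auto
      then show ?thesis using ZZ zz[of c c' L y] by (simp add: zv_def adj_map del: upt_Suc)
    qed
  qed
  show "xor_clique (Suc L) n (CC L y n W)"
    unfolding xor_clique_def using vw vz adj by (auto simp: CC_def)
next
  have injw: "inj_on (\<lambda>(i,a). wv L i a) W"
  proof (rule inj_onI, clarify)
    fix i a j b assume A: "(i,a) \<in> W" "(j,b) \<in> W" "wv L i a = wv L j b"
    have ia: "i < L" "a \<ge> 2" "j < L" "b \<ge> 2" using W A by auto
    have eq: "wfn L i a k = wfn L j b k" if "k < Suc L" for k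
      using A(3) that unfolding wv_def by (metis (no_types, lifting) add_0 diff_zero length_map length_upt nth_map_upt)
    have "i = j"
    proof (rule ccontr)
      assume "i \<noteq> j"
      then consider "i < j" | "j < i" by linarith
      then show False
      proof cases
        case 1 then show ?thesis using eq[of i] ia by (simp add: wfn_def)
      next
        case 2 then show ?thesis using eq[of j] ia by (simp add: wfn_def)
      qed
    qed
    moreover have "a = b" using eq[of i] ia \<open>i = j\<close> by (simp add: wfn_def)
    ultimately show "i = j \<and> a = b" by simp
  qed
  have injz: "inj_on (zv L y) {2..<n}"
  proof (rule inj_onI)
    fix c c' assume "zv L y c = zv L y c'"
    then have "zv L y c ! L = zv L y c' ! L" by simp
    then show "c = c'" by (simp add: zv_def zfn_def del: upt_Suc)
  qed
  have ne: "wv L i a \<noteq> zv L y c" if "(i,a) \<in> W" "c \<in> {2..<n}" for i a c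
  proof
    assume "wv L i a = zv L y c"
    then have "wv L i a ! L = zv L y c ! L" by simp
    moreover have "wv L i a ! L = i mod 2" using that W
      by (auto simp: wv_def wfn_def simp del: upt_Suc)
    moreover have "zv L y c ! L = c" by (simp add: zv_def zfn_def del: upt_Suc)
    ultimately show False using that by auto
  qed
  have disj: "(\<lambda>(i,a). wv L i a) ` W \<inter> zv L y ` {2..<n} = {}"
    unfolding disjoint_iff using ne by fastforce
  have fW: "finite W" using W finite_subset by (metis finite_SigmaI finite_atLeastLessThan)
  show "card (CC L y n W) = card W + (n - 2)"
    unfolding CC_def
    by (subst card_Un_disjoint) (use fW disj card_image[OF injw] card_image[OF injz] in auto)
qed

lemma ar: "(Suc b + r) div 2 - (a + r) div 2 = (b + r) div 2 - (a + r) div 2 + (if a \<le> b \<and> odd (b + r) then 1 else (0::nat))"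
proof -
  have s: "(Suc b + r) div 2 = (b + r) div 2 + (if odd (b + r) then 1 else 0)" by presburger
  show ?thesis
  proof (cases "a \<le> b")
    case True
    have "(a + r) div 2 \<le> (b + r) div 2" using True by (simp add: div_le_mono)
    then show ?thesis using True s by simp
  next
    case False
    then have "(Suc b + r) div 2 \<le> (a + r) div 2" by (simp add: div_le_mono)
    moreover have "(b + r) div 2 \<le> (a + r) div 2" using False by (simp add: div_le_mono)
    ultimately show ?thesis using False by simp
  qed
qed

lemma cnt: "card {k. a \<le> k \<and> k < b \<and> odd (k + t)} = (b + t mod 2) div 2 - (a + t mod 2) div 2"
proof (induction b)
  case 0 then show ?case by simp
next
  case (Suc b)
  have e: "{k. a \<le> k \<and> k < Suc b \<and> odd (k + t)} = {k. a \<le> k \<and> k < b \<and> odd (k + t)} \<union> {k. k = b \<and> a \<le> b \<and> odd (b + t)}"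
    by (auto simp: less_Suc_eq)
  have "card {k. a \<le> k \<and> k < Suc b \<and> odd (k + t)} = card {k. a \<le> k \<and> k < b \<and> odd (k + t)} + card {k. k = b \<and> a \<le> b \<and> odd (b + t)}"
    unfolding e by (rule card_Un_disjoint) auto
  moreover have "card {k. k = b \<and> a \<le> b \<and> odd (b + t)} = (if a \<le> b \<and> odd (b + t mod 2) then 1 else 0)" by auto
  ultimately show ?case using Suc.IH ar[of b "t mod 2" a] by simp
qed

lemma parA: fixes L i :: nat assumes "L mod 4 = 2" "i < L"
  shows "odd (card {k. k < i \<and> k mod 2 \<noteq> 1} + card {k. i < k \<and> k < L \<and> k mod 2 \<noteq> 0})"
proof -
  have e1: "{k. k < i \<and> k mod 2 \<noteq> 1} = {k. 0 \<le> k \<and> k < i \<and> odd (k + 1)}" by (auto; presburger)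
  have e2: "{k. i < k \<and> k < L \<and> k mod 2 \<noteq> 0} = {k. Suc i \<le> k \<and> k < L \<and> odd (k + 2)}" by (auto; presburger)
  have c1: "card {k. k < i \<and> k mod 2 \<noteq> 1} = (i+1) div 2" unfolding e1 cnt by simp
  have c2: "card {k. i < k \<and> k < L \<and> k mod 2 \<noteq> 0} = L div 2 - (i+1) div 2" unfolding e2 cnt by simp
  have "(i+1) div 2 \<le> L div 2" using assms by (simp add: div_le_mono)
  moreover have "odd (L div 2)" using assms(1) by presburger
  ultimately show ?thesis unfolding c1 c2 by simp
qed

lemma parB: fixes L i :: nat assumes "L mod 4 = 0" "i < L"
  shows "odd (card {k. k < i \<and> (k + 1) mod 2 \<noteq> 1} + card {k. i < k \<and> k < L \<and> (k + 1) mod 2 \<noteq> 0})"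
proof -
  have e1: "{k. k < i \<and> (k + 1) mod 2 \<noteq> 1} = {k. 0 \<le> k \<and> k < i \<and> odd (k + 2)}" by (auto; presburger)
  have e2: "{k. i < k \<and> k < L \<and> (k + 1) mod 2 \<noteq> 0} = {k. Suc i \<le> k \<and> k < L \<and> odd (k + 1)}" by (auto; presburger)
  have c1: "card {k. k < i \<and> (k + 1) mod 2 \<noteq> 1} = i div 2" unfolding e1 cnt by simp
  have c2: "card {k. i < k \<and> k < L \<and> (k + 1) mod 2 \<noteq> 0} = (L + 1) div 2 - (i + 2) div 2" unfolding e2 cnt by simp
  have h1: "(i + 2) div 2 = i div 2 + 1" by simp
  have h2: "(L + 1) div 2 = L div 2" using assms(1) by presburger
  have h3: "i div 2 + 1 \<le> L div 2" using assms by presburger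
  have h4: "odd (L div 2 - 1)" using assms by presburger
  have "i div 2 + ((L + 1) div 2 - (i + 2) div 2) = L div 2 - 1" unfolding h1 h2 using h3 by linarith
  then show ?thesis unfolding c1 c2 using h4 by simp
qed

definition yC :: "nat \<Rightarrow> nat" where "yC k = (if k = 0 then 2 else k mod 2)"

lemma parC: fixes L i :: nat assumes "L mod 4 = 3" "i < L"
  shows "odd (card {k. k < i \<and> yC k \<noteq> 1} + card {k. i < k \<and> k < L \<and> yC k \<noteq> 0})"
proof -
  have e1: "{k. k < i \<and> yC k \<noteq> 1} = {k. 0 \<le> k \<and> k < i \<and> odd (k + 1)}" by (auto simp: yC_def; presburger)
  have e2: "{k. i < k \<and> k < L \<and> yC k \<noteq> 0} = {k. Suc i \<le> k \<and> k < L \<and> odd (k + 2)}" by (auto simp: yC_def; presburger)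
  have c1: "card {k. k < i \<and> yC k \<noteq> 1} = (i+1) div 2" unfolding e1 cnt by simp
  have c2: "card {k. i < k \<and> k < L \<and> yC k \<noteq> 0} = L div 2 - (i+1) div 2" unfolding e2 cnt by simp
  have "(i+1) div 2 \<le> L div 2" using assms by (simp add: div_le_mono)
  moreover have "odd (L div 2)" using assms(1) by presburger
  ultimately show ?thesis unfolding c1 c2 by simp
qed

definition yD :: "nat \<Rightarrow> nat" where "yD k = (if k = 0 then 0 else if k = 1 then 2 else (k + 1) mod 2)"

lemma parD: fixes L i :: nat assumes "L mod 4 = 1" "i < L" "L \<ge> 2"
  shows "odd (card {k. k < i \<and> yD k \<noteq> 1} + card {k. i < k \<and> k < L \<and> yD k \<noteq> 0})"
proof -
  have cB: "card {k. 2 \<le> k \<and> k < L \<and> odd (k + 1)} = (L + 1) div 2 - 1" unfolding cnt by simp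
  have hL: "odd ((L + 1) div 2)" "(L + 1) div 2 \<ge> 1" using assms by presburger+
  consider "i = 0" | "i = 1" | "i \<ge> 2" by linarith
  then show ?thesis
  proof cases
    case 1
    have e1: "{k. k < i \<and> yD k \<noteq> 1} = {}" using 1 by auto
    have e2: "{k. i < k \<and> k < L \<and> yD k \<noteq> 0} = {1} \<union> {k. 2 \<le> k \<and> k < L \<and> odd (k + 1)}"
      using 1 assms by (auto simp: yD_def; presburger)
    have c: "card ({1} \<union> {k. 2 \<le> k \<and> k < L \<and> odd (k + 1)}) = 1 + card {k. 2 \<le> k \<and> k < L \<and> odd (k + 1)}"
      by (subst card_Un_disjoint) auto
    show ?thesis unfolding e1 e2 c cB using hL by simp
  next
    case 2
    have e1: "{k. k < i \<and> yD k \<noteq> 1} = {0}" using 2 by (auto simp: yD_def)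
    have e2: "{k. i < k \<and> k < L \<and> yD k \<noteq> 0} = {k. 2 \<le> k \<and> k < L \<and> odd (k + 1)}"
      using 2 by (auto simp: yD_def; presburger)
    show ?thesis unfolding e1 e2 cB using hL by simp
  next
    case 3
    have e1: "{k. k < i \<and> yD k \<noteq> 1} = {0, 1} \<union> {k. 2 \<le> k \<and> k < i \<and> odd (k + 2)}"
      using 3 by (auto simp: yD_def; presburger)
    have c: "card ({0, 1} \<union> {k. 2 \<le> k \<and> k < i \<and> odd (k + 2)}) = 2 + card {k. 2 \<le> k \<and> k < i \<and> odd (k + 2)}"
      by (subst card_Un_disjoint) auto
    have c1: "card {k. 2 \<le> k \<and> k < i \<and> odd (k + 2)} = i div 2 - 1" unfolding cnt by simp
    have e2: "{k. i < k \<and> k < L \<and> yD k \<noteq> 0} = {k. Suc i \<le> k \<and> k < L \<and> odd (k + 1)}"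
      using 3 by (auto simp: yD_def; presburger)
    have c2: "card {k. Suc i \<le> k \<and> k < L \<and> odd (k + 1)} = (L + 1) div 2 - (i + 2) div 2" unfolding cnt by simp
    have h1: "(i + 2) div 2 = i div 2 + 1" by simp
    have h2: "i div 2 \<ge> 1" using 3 by presburger
    have h3: "i div 2 + 1 \<le> (L + 1) div 2" using assms by presburger
    have "2 + (i div 2 - 1) + ((L + 1) div 2 - (i + 2) div 2) = (L + 1) div 2" unfolding h1 using h2 h3 by linarith
    then show ?thesis unfolding e1 c c1 e2 c2 using hL by simp
  qed
qed

lemma mk:
  assumes n: "3 \<le> n" and W: "W \<subseteq> {0..<L} \<times> {2..<n}"
    and yb: "\<And>k. k < L \<Longrightarrow> y k < n"
    and ya: "\<And>i a. (i,a) \<in> W \<Longrightarrow> y i \<noteq> a"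
    and par: "\<And>i a. (i,a) \<in> W \<Longrightarrow> odd (card {k. k < i \<and> y k \<noteq> 1} + card {k. i < k \<and> k < L \<and> y k \<noteq> 0})"
    and cW: "int (card W) \<ge> int L * (int n - 2) - 1"
  shows "\<exists>C. xor_clique (Suc L) n C \<and> int (card C) \<ge> int (Suc L) * int n - 2 * int (Suc L) - 1"
proof -
  have g: "xor_clique (Suc L) n (CC L y n W) \<and> card (CC L y n W) = card W + (n - 2)"
    by (rule generic[OF n W yb ya par])
  have "int (card (CC L y n W)) = int (card W) + int n - 2" using g n by simp
  moreover have "int (Suc L) * int n - 2 * int (Suc L) - 1 = int L * (int n - 2) - 1 + (int n - 2)"
    by (simp add: algebra_simps)
  ultimately show ?thesis using g cW by (intro exI[of _ "CC L y n W"]) linarith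
qed

lemma card_full: "card ({0..<L} \<times> {2..<n}) = L * (n - 2)"
  by (simp add: card_cartesian_product)

lemma card_full_minus:
  assumes "s < L" "3 \<le> n"
  shows "int (card ({0..<L} \<times> {2..<n} - {(s,2)})) \<ge> int L * (int n - 2) - 1"
proof -
  have "(s,2) \<in> {0..<L} \<times> {2..<n}" using assms by auto
  then have "card ({0..<L} \<times> {2..<n} - {(s,2)}) = L * (n - 2) - 1" by (simp add: card_full)
  moreover have "L * (n - 2) \<ge> 1" using assms by simp
  ultimately have "int (card ({0..<L} \<times> {2..<n} - {(s,2)})) = int L * int (n - 2) - 1" by simp
  then show ?thesis using assms by simp
qed

lemma lower:
  assumes l: "l \<ge> 3" and n: "n \<ge> 3"
  shows "\<exists>C. xor_clique l n C \<and> int (card C) \<ge> int l * int n - 2 * int l - 1"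
proof -
  define L where "L = l - 1"
  have lL: "l = Suc L" and L2: "L \<ge> 2" using l unfolding L_def by auto
  let ?F = "{0..<L} \<times> {2..<n}"
  have cF: "int (card ?F) \<ge> int L * (int n - 2) - 1" using n by (simp add: card_full)
  have m2: "k mod 2 < n" for k
  proof -
    have "k mod 2 < 2" by simp
    then show ?thesis using n by linarith
  qed
  have Fa: "a \<ge> 2" "i < L" if "(i,a) \<in> ?F" for i a using that by auto
  consider "L mod 4 = 0" | "L mod 4 = 1" | "L mod 4 = 2" | "L mod 4 = 3" by linarith
  then show ?thesis
  proof cases
    case 1
    have "\<exists>C. xor_clique (Suc L) n C \<and> int (card C) \<ge> int (Suc L) * int n - 2 * int (Suc L) - 1"
    proof (rule mk[OF n _ _ _ _ cF, where y = "\<lambda>k. (k + 1) mod 2"])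
      show "\<And>k. k < L \<Longrightarrow> (k + 1) mod 2 < n" using n by simp
      show "\<And>i a. (i,a) \<in> ?F \<Longrightarrow> (i + 1) mod 2 \<noteq> a" using Fa by fastforce
      show "\<And>i a. (i,a) \<in> ?F \<Longrightarrow> odd (card {k. k < i \<and> (k + 1) mod 2 \<noteq> 1} + card {k. i < k \<and> k < L \<and> (k + 1) mod 2 \<noteq> 0})"
        by (rule parB[OF 1]) auto
    qed simp
    then show ?thesis using lL by simp
  next
    case 3
    have "\<exists>C. xor_clique (Suc L) n C \<and> int (card C) \<ge> int (Suc L) * int n - 2 * int (Suc L) - 1"
    proof (rule mk[OF n _ _ _ _ cF, where y = "\<lambda>k. k mod 2"])
      show "\<And>k. k < L \<Longrightarrow> k mod 2 < n" using n by simp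
      show "\<And>i a. (i,a) \<in> ?F \<Longrightarrow> i mod 2 \<noteq> a" using Fa by fastforce
      show "\<And>i a. (i,a) \<in> ?F \<Longrightarrow> odd (card {k. k < i \<and> k mod 2 \<noteq> 1} + card {k. i < k \<and> k < L \<and> k mod 2 \<noteq> 0})"
        by (rule parA[OF 3]) auto
    qed simp
    then show ?thesis using lL by simp
  next
    case 4
    have cW: "int (card (?F - {(0,2)})) \<ge> int L * (int n - 2) - 1" by (rule card_full_minus) (use L2 n in auto)
    have "\<exists>C. xor_clique (Suc L) n C \<and> int (card C) \<ge> int (Suc L) * int n - 2 * int (Suc L) - 1"
    proof (rule mk[OF n _ _ _ _ cW, where y = yC])
      show "\<And>k. k < L \<Longrightarrow> yC k < n" using n m2 by (simp add: yC_def)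
      show "\<And>i a. (i,a) \<in> ?F - {(0,2)} \<Longrightarrow> yC i \<noteq> a" by (auto simp: yC_def)
      show "\<And>i a. (i,a) \<in> ?F - {(0,2)} \<Longrightarrow> odd (card {k. k < i \<and> yC k \<noteq> 1} + card {k. i < k \<and> k < L \<and> yC k \<noteq> 0})"
        by (rule parC[OF 4]) auto
    qed auto
    then show ?thesis using lL by simp
  next
    case 2
    have cW: "int (card (?F - {(1,2)})) \<ge> int L * (int n - 2) - 1" by (rule card_full_minus) (use L2 n in auto)
    have "\<exists>C. xor_clique (Suc L) n C \<and> int (card C) \<ge> int (Suc L) * int n - 2 * int (Suc L) - 1"
    proof (rule mk[OF n _ _ _ _ cW, where y = yD])
      show "\<And>k. k < L \<Longrightarrow> yD k < n" using n m2 by (simp add: yD_def)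
      show "\<And>i a. (i,a) \<in> ?F - {(1,2)} \<Longrightarrow> yD i \<noteq> a" by (auto simp: yD_def)
      show "\<And>i a. (i,a) \<in> ?F - {(1,2)} \<Longrightarrow> odd (card {k. k < i \<and> yD k \<noteq> 1} + card {k. i < k \<and> k < L \<and> yD k \<noteq> 0})"
        by (rule parD[OF 2 _ L2]) auto
    qed auto
    then show ?thesis using lL by simp
  qed
qed

theorem theorem1p2:
  fixes l n :: nat
  assumes "l \<ge> 3" and "n \<ge> 1"
  shows "int l * int n - 2 * int l - 1 \<le> int (f_xor l n)
         \<and> int (f_xor l n) \<le> int l * int n - int l + 1"
proof -
  let ?K = "{C. xor_clique l n C}"
  have fV: "finite (xor_vertices l n)"
  proof -
    have "xor_vertices l n = {xs. set xs \<subseteq> {0..<n} \<and> length xs = l}"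
      by (auto simp: xor_vertices_def)
    then show ?thesis using finite_lists_length_eq[of "{0..<n}" l] by simp
  qed
  have "?K \<subseteq> Pow (xor_vertices l n)" by (auto simp: xor_clique_def)
  then have fK: "finite ?K" using fV by (meson finite_Pow_iff finite_subset)
  have e: "{} \<in> ?K" by (simp add: xor_clique_def)
  have fI: "finite (card ` ?K)" using fK by simp
  have nI: "card ` ?K \<noteq> {}" using e by blast
  have up: "f_xor l n \<le> l * n - (l - 1)"
    unfolding f_xor_def using upper_clique assms by (auto simp: Max_le_iff[OF fI nI])
  have "l * n \<ge> l" using assms by simp
  have i1: "int (l * n - (l - 1)) = int (l * n) - int (l - 1)"
    by (rule of_nat_diff) (use \<open>l * n \<ge> l\<close> in linarith)
  have i2: "int (l - 1) = int l - 1" using assms by (simp add: of_nat_diff)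
  have "int (f_xor l n) \<le> int (l * n - (l - 1))" using up by (simp only: of_nat_le_iff)
  then have up': "int (f_xor l n) \<le> int l * int n - int l + 1" unfolding i1 i2 by simp
  have low: "int l * int n - 2 * int l - 1 \<le> int (f_xor l n)"
  proof (cases "n \<ge> 3")
    case True
    obtain C where C: "xor_clique l n C" "int (card C) \<ge> int l * int n - 2 * int l - 1"
      using lower[OF assms(1) True] by blast
    have "card C \<le> f_xor l n" unfolding f_xor_def using C(1) fI by (simp add: Max_ge)
    then show ?thesis using C(2) by linarith
  next
    case False
    then have "int n \<le> 2" by simp
    then have "int l * int n \<le> int l * 2" by (simp add: mult_left_mono)
    then show ?thesis by linarith
  qed
  show ?thesis using low up' by simp
qed

end
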